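(* Let $f(\mathbf z)$ be a convenient non-degenerate holomorphic function near the origin of $\mathbb C^n$, let $a>b\ge0$ be integers, and $g(\mathbf w,\bar{\mathbf w})=f(w_1^a\bar w_1^b,\dots,w_n^a\bar w_n^b)$. Let $\mathbf w\ne0$ be a point (in the domain) with $g(\mathbf w,\bar{\mathbf w})\ne0$. Let $\pi:\mathbb C^n\to\mathbb C^n$ be the hermitian orthogonal projection onto $\{\mathbf v:(\mathbf v,\mathbf w)=0\}$, and set $\mathbf v_{11}=\pi\big(g\,\overline{\nabla_\partial g}\big)$, $\mathbf v_{21}=\pi\big(\bar g\,\nabla_{\bar\partial}g\big)$ (evaluated at $\mathbf w$). Then $\|\mathbf v_{11}\|^2-\|\mathbf v_{21}\|^2\ge0$, and equality holds if and only if $\overline{\nabla_\partial g}(\mathbf w,\bar{\mathbf w})=\lambda_1\mathbf w$ and $\nabla_{\bar\partial}g(\mathbf w,\bar{\mathbf w})=\lambda_2\mathbf w$ for some $\lambda_1,\lambda_2\in\mathbb C$. In this case $\nabla\theta(\mathbf w)=\lambda R(\mathbf w)$ for some $\lambda\in\mathbb C$.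
   Context: Hermitian product $(\mathbf u,\mathbf v)=\sum u_j\bar v_j$. $\nabla_\partial g=(g_{w_1},\dots,g_{w_n})$, $\nabla_{\bar\partial}g=(g_{\bar w_1},\dots,g_{\bar w_n})$ with $g_{w_j}=\partial g/\partial w_j$, $g_{\bar w_j}=\partial g/\partial\bar w_j$; the bar on a vector means componentwise conjugation. $\theta=\arg g$ on $\{g\ne0\}$ and its hermitian gradient is $\nabla\theta=i\big(\overline{g_{w_1}}/\bar g-g_{\bar w_1}/g,\dots,\overline{g_{w_n}}/\bar g-g_{\bar w_n}/g\big)$. $R(\mathbf w)=i\mathbf w/(2\rho(\mathbf w))$, $\rho(\mathbf w)=\sum|w_j|^2$ (Reeb vector field of the canonical contact form on spheres). Convenient/non-degenerate: Newton boundary of $f$ meets every coordinate axis and each face function $f_P$ has no critical point on $f_P^{-1}(0)\cap(\mathbb C^* )^n$. *)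

theory Defs
  imports "HOL-Analysis.Analysis"
begin

definition monom :: "nat^'n \<Rightarrow> complex^'n \<Rightarrow> complex" where
  "monom \<nu> z = (\<Prod>j\<in>UNIV. (z$j) ^ (\<nu>$j))"

definition expvec :: "nat^'n \<Rightarrow> real^'n" where
  "expvec \<nu> = (\<chi> j. real (\<nu>$j))"

definition newton_polyhedron :: "(nat^'n \<Rightarrow> complex) \<Rightarrow> (real^'n) set" where
  "newton_polyhedron c =
     convex hull (\<Union>\<nu>\<in>{\<nu>. c \<nu> \<noteq> 0}. (\<lambda>x. expvec \<nu> + x) ` {x. \<forall>j. 0 \<le> x$j})"

definition compact_faces :: "(nat^'n \<Rightarrow> complex) \<Rightarrow> (real^'n) set set" where
  "compact_faces c = {F. F face_of newton_polyhedron c \<and> compact F \<and> F \<noteq> {}}"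

definition newton_boundary :: "(nat^'n \<Rightarrow> complex) \<Rightarrow> (real^'n) set" where
  "newton_boundary c = \<Union> (compact_faces c)"

definition convenient :: "(nat^'n \<Rightarrow> complex) \<Rightarrow> bool" where
  "convenient c \<longleftrightarrow> (\<forall>j. newton_boundary c \<inter> range (\<lambda>t. t *\<^sub>R axis j (1::real)) \<noteq> {})"

definition face_function :: "(nat^'n \<Rightarrow> complex) \<Rightarrow> (real^'n) set \<Rightarrow> complex^'n \<Rightarrow> complex" where
  "face_function c F z = (\<Sum>\<nu>\<in>{\<nu>. c \<nu> \<noteq> 0 \<and> expvec \<nu> \<in> F}. c \<nu> * monom \<nu> z)"

definition nondegenerate :: "(nat^'n \<Rightarrow> complex) \<Rightarrow> bool" where
  "nondegenerate c \<longleftrightarrow> (\<forall>F\<in>compact_faces c.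
      \<not> (\<exists>z. (\<forall>j. z$j \<noteq> 0) \<and> face_function c F z = 0 \<and>
             (face_function c F has_derivative (\<lambda>h. 0)) (at z)))"

definition wirt_d :: "(complex^'n \<Rightarrow> complex) \<Rightarrow> complex^'n \<Rightarrow> 'n \<Rightarrow> complex" where
  "wirt_d g w j = (frechet_derivative g (at w) (axis j 1) - \<i> * frechet_derivative g (at w) (axis j \<i>)) / 2"

definition wirt_dbar :: "(complex^'n \<Rightarrow> complex) \<Rightarrow> complex^'n \<Rightarrow> 'n \<Rightarrow> complex" where
  "wirt_dbar g w j = (frechet_derivative g (at w) (axis j 1) + \<i> * frechet_derivative g (at w) (axis j \<i>)) / 2"

definition grad_d :: "(complex^'n \<Rightarrow> complex) \<Rightarrow> complex^'n \<Rightarrow> complex^'n" where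
  "grad_d g w = (\<chi> j. wirt_d g w j)"

definition grad_dbar :: "(complex^'n \<Rightarrow> complex) \<Rightarrow> complex^'n \<Rightarrow> complex^'n" where
  "grad_dbar g w = (\<chi> j. wirt_dbar g w j)"

definition vcnj :: "complex^'n \<Rightarrow> complex^'n" where
  "vcnj v = (\<chi> j. cnj (v$j))"

definition herm :: "complex^'n \<Rightarrow> complex^'n \<Rightarrow> complex" where
  "herm u v = (\<Sum>j\<in>UNIV. u$j * cnj (v$j))"

definition proj_perp :: "complex^'n \<Rightarrow> complex^'n \<Rightarrow> complex^'n" where
  "proj_perp w x = x - (herm x w / herm w w) *s w"

definition rho :: "complex^'n \<Rightarrow> real" where
  "rho w = (\<Sum>j\<in>UNIV. (cmod (w$j))^2)"

definition reeb :: "complex^'n \<Rightarrow> complex^'n" where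
  "reeb w = (\<i> / (2 * complex_of_real (rho w))) *s w"

text \<open>Hermitian gradient of theta = arg g.\<close>
definition grad_theta :: "(complex^'n \<Rightarrow> complex) \<Rightarrow> complex^'n \<Rightarrow> complex^'n" where
  "grad_theta g w = (\<chi> j. \<i> * (cnj (wirt_d g w j) / cnj (g w) - wirt_dbar g w j / g w))"

end

theory Submission
  imports Defs
begin


definition dmon :: "nat^'n \<Rightarrow> complex^'n \<Rightarrow> complex^'n \<Rightarrow> complex" where
  "dmon \<nu> x h = (\<Sum>j\<in>UNIV. (of_nat (\<nu>$j) * h$j * x$j^(\<nu>$j - 1)) * (\<Prod>k\<in>UNIV-{j}. x$k^(\<nu>$k)))"

lemma monom_deriv: fixes x :: "complex^'n" shows "(monom \<nu> has_derivative dmon \<nu> x) (at x within S)"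
proof -
  have "((\<lambda>x::complex^'n. \<Prod>j\<in>UNIV. (x$j)^(\<nu>$j)) has_derivative dmon \<nu> x) (at x within S)"
    unfolding dmon_def
    apply (rule derivative_eq_intros)
     apply (rule derivative_eq_intros)
      apply (rule bounded_linear_imp_has_derivative[OF bounded_linear_vec_nth])
     apply (rule refl)
    apply simp
    done
  then show ?thesis unfolding monom_def[abs_def] by simp
qed

lemma dmon_axis: "dmon \<nu> x (axis j s) = s * dmon \<nu> x (axis j 1)"
proof -
  have "\<And>i. (axis j s)$i = s * (axis j 1)$i" by (simp add: axis_def)
  then show ?thesis unfolding dmon_def by (simp add: sum_distrib_left ac_simps)
qed

lemma pow_bound:
  fixes \<rho> R :: real
  assumes "0 \<le> \<rho>" "\<rho> < R"
  shows "real n * \<rho>^(n-1) \<le> R^n / (R - \<rho>)"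
proof -
  have "real n * \<rho>^(n-1) * (R - \<rho>) \<le> R^n - \<rho>^n"
  proof (induction n)
    case 0 then show ?case by simp
  next
    case (Suc n)
    have "real (Suc n) * \<rho>^n * (R - \<rho>) = \<rho> * (real n * \<rho>^(n-1) * (R - \<rho>)) + \<rho>^n * (R - \<rho>)"
      by (cases n) (auto simp: algebra_simps)
    also have "\<dots> \<le> \<rho> * (R^n - \<rho>^n) + \<rho>^n * (R - \<rho>)"
      using Suc assms by (intro add_mono mult_left_mono) auto
    also have "\<dots> \<le> R^Suc n - \<rho>^Suc n"
    proof -
      have "\<rho>^n \<le> R^n" using assms by (intro power_mono) auto
      then have "0 \<le> (R - \<rho>) * (R^n - \<rho>^n)" using assms by auto
      then show ?thesis by (simp add: algebra_simps)
    qed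
    finally show ?case by simp
  qed
  also have "\<dots> \<le> R^n" using assms by simp
  finally show ?thesis using assms by (simp add: field_simps)
qed



lemma dmon_bound:
  fixes x h :: "complex^'n" and \<rho> R :: "'n \<Rightarrow> real"
  assumes "\<And>i. cmod (x$i) \<le> \<rho> i" "\<And>i. 0 \<le> \<rho> i" "\<And>i. R i - \<rho> i = d" "d > 0"
  shows "cmod (dmon \<nu> x h) \<le> (real CARD('n) / d) * (\<Prod>i\<in>UNIV. R i ^ (\<nu>$i)) * norm h"
proof -
  have Rpos: "\<rho> i < R i" for i using assms(3)[of i] assms(4) by linarith
  have "cmod (dmon \<nu> x h) \<le> (\<Sum>j\<in>UNIV. cmod ((of_nat (\<nu>$j) * h$j * x$j^(\<nu>$j - 1)) * (\<Prod>k\<in>UNIV-{j}. x$k^(\<nu>$k))))"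
    unfolding dmon_def by (rule norm_sum)
  also have "\<dots> \<le> (\<Sum>j\<in>(UNIV::'n set). norm h * (\<Prod>i\<in>UNIV. R i ^ (\<nu>$i)) / d)"
  proof (intro sum_mono)
    fix j
    have "cmod ((of_nat (\<nu>$j) * h$j * x$j^(\<nu>$j - 1)) * (\<Prod>k\<in>UNIV-{j}. x$k^(\<nu>$k)))
        = cmod (h$j) * (real (\<nu>$j) * cmod (x$j)^(\<nu>$j - 1)) * (\<Prod>k\<in>UNIV-{j}. cmod (x$k)^(\<nu>$k))"
      by (simp add: norm_mult norm_power prod_norm[symmetric])
    also have "\<dots> \<le> norm h * (real (\<nu>$j) * \<rho> j^(\<nu>$j - 1)) * (\<Prod>k\<in>UNIV-{j}. R k^(\<nu>$k))"
    proof -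
      have 1: "cmod (h$j) \<le> norm h" by (rule Finite_Cartesian_Product.norm_nth_le)
      have 2: "real (\<nu>$j) * cmod (x$j)^(\<nu>$j - 1) \<le> real (\<nu>$j) * \<rho> j^(\<nu>$j - 1)"
        using assms(1)[of j] by (intro mult_left_mono power_mono) auto
      have 3: "(\<Prod>k\<in>UNIV-{j}. cmod (x$k)^(\<nu>$k)) \<le> (\<Prod>k\<in>UNIV-{j}. R k^(\<nu>$k))"
      proof (rule prod_mono)
        fix k show "0 \<le> cmod (x$k)^(\<nu>$k) \<and> cmod (x$k)^(\<nu>$k) \<le> R k^(\<nu>$k)"
          using assms(1)[of k] Rpos[of k] by (auto intro: power_mono)
      qed
      have 4: "0 \<le> real (\<nu>$j) * \<rho> j^(\<nu>$j - 1)" using assms(2) by simp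
      have 5: "0 \<le> (\<Prod>k\<in>UNIV-{j}. cmod (x$k)^(\<nu>$k))" by (simp add: prod_nonneg)
      show ?thesis
        by (intro mult_mono 1 2 3 4 5) (use 4 in auto)
    qed
    also have "\<dots> \<le> norm h * (R j ^ (\<nu>$j) / d) * (\<Prod>k\<in>UNIV-{j}. R k^(\<nu>$k))"
    proof -
      have "real (\<nu>$j) * \<rho> j^(\<nu>$j - 1) \<le> R j ^ (\<nu>$j) / d"
        using pow_bound[of "\<rho> j" "R j" "\<nu>$j"] assms(2,3) Rpos by simp
      moreover have "0 \<le> (\<Prod>k\<in>UNIV-{j}. R k^(\<nu>$k))"
        using assms(2) Rpos by (intro prod_nonneg) (meson less_imp_le order_trans zero_le_power)
      ultimately have "norm h * (real (\<nu>$j) * \<rho> j^(\<nu>$j - 1)) * (\<Prod>k\<in>UNIV-{j}. R k^(\<nu>$k))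
          \<le> norm h * (R j ^ (\<nu>$j) / d) * (\<Prod>k\<in>UNIV-{j}. R k^(\<nu>$k))"
        by (intro mult_right_mono mult_left_mono) auto
      then show ?thesis by simp
    qed
    also have "\<dots> = norm h * (\<Prod>i\<in>UNIV. R i ^ (\<nu>$i)) / d"
      by (simp add: prod.remove[of UNIV j])
    finally show "cmod ((of_nat (\<nu>$j) * h$j * x$j^(\<nu>$j - 1)) * (\<Prod>k\<in>UNIV-{j}. x$k^(\<nu>$k))) \<le> norm h * (\<Prod>i\<in>UNIV. R i ^ (\<nu>$i)) / d" .
  qed
  also have "\<dots> = (real CARD('n) / d) * (\<Prod>i\<in>UNIV. R i ^ (\<nu>$i)) * norm h"
    by simp
  finally show ?thesis .
qed



lemma norm_le_sum_cart: "norm (x::complex^'n) \<le> (\<Sum>i\<in>UNIV. cmod (x$i))"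
  unfolding norm_vec_def by (rule L2_set_le_sum) simp

lemma infinite_natvec: "infinite (UNIV :: (nat^'n) set)"
proof -
  have "inj (vec :: nat \<Rightarrow> nat^'n)" by (auto simp: inj_def vec_eq_iff)
  then have "infinite (range (vec :: nat \<Rightarrow> nat^'n))" by (rule range_inj_infinite)
  then show ?thesis by (rule infinite_super[OF subset_UNIV])
qed

lemma norm_monom: "cmod (monom \<nu> z) = (\<Prod>i\<in>UNIV. cmod (z$i) ^ (\<nu>$i))"
  unfolding monom_def by (simp add: prod_norm[symmetric] norm_power)

lemma powser_deriv:
  fixes c :: "nat^'n \<Rightarrow> complex" and f :: "complex^'n \<Rightarrow> complex"
  assumes U: "open U" and hs: "\<forall>z\<in>U. ((\<lambda>\<nu>. c \<nu> * monom \<nu> z) has_sum f z) UNIV" and z: "z \<in> U"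
  shows "\<exists>L. (f has_derivative L) (at z) \<and> (\<forall>j s. L (axis j s) = s * L (axis j 1))"
proof -
  obtain e where e: "e > 0" "ball z e \<subseteq> U" using U z open_contains_ball by blast
  define s where "s = e / (2 * real CARD('n))"
  have s: "s > 0" using e by (simp add: s_def)
  define z' where "z' = (\<chi> j. z$j + of_real s * (if z$j = 0 then 1 else sgn (z$j)))"
  have nz': "cmod (z'$j) = cmod (z$j) + s" for j
  proof (cases "z$j = 0")
    case True then show ?thesis using s by (simp add: z'_def)
  next
    case False
    have "z'$j = z$j * of_real (1 + s / cmod (z$j))"
      using False by (simp add: z'_def sgn_div_norm scaleR_conv_of_real field_simps)
    then have "cmod (z'$j) = cmod (z$j) * \<bar>1 + s / cmod (z$j)\<bar>" by (simp only: norm_mult norm_of_real)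
    also have "\<dots> = cmod (z$j) + s" using False s by (simp add: field_simps)
    finally show ?thesis .
  qed
  have "norm (z' - z) \<le> (\<Sum>i\<in>UNIV. cmod ((z' - z)$i))" by (rule norm_le_sum_cart)
  also have "\<dots> = real CARD('n) * s"
  proof -
    have "cmod ((z' - z)$i) = s" for i using s by (cases "z$i = 0") (simp_all add: z'_def norm_mult norm_sgn)
    then show ?thesis by simp
  qed
  also have "\<dots> < e" using e by (simp add: s_def)
  finally have "z' \<in> U" using e by (auto simp: dist_norm norm_minus_commute)
  define R where "R j = cmod (z$j) + s" for j
  define \<rho> where "\<rho> j = cmod (z$j) + s/2" for j
  have abs: "(\<lambda>\<nu>. cmod (c \<nu>) * (\<Prod>i\<in>UNIV. R i ^ (\<nu>$i))) summable_on UNIV"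
  proof -
    have "(\<lambda>\<nu>. c \<nu> * monom \<nu> z') summable_on UNIV" using hs \<open>z' \<in> U\<close> by (blast intro: has_sum_imp_summable)
    then have "(\<lambda>\<nu>. norm (c \<nu> * monom \<nu> z')) summable_on UNIV"
      by (rule summable_on_iff_abs_summable_on_complex[THEN iffD1])
    then show ?thesis by (simp add: norm_mult norm_monom nz' R_def)
  qed
  define E where "E = from_nat_into (UNIV :: (nat^'n) set)"
  have bij: "bij_betw E UNIV UNIV"
    unfolding E_def by (rule bij_betw_from_nat_into) (simp_all add: infinite_natvec)
  define B where "B k = cmod (c (E k)) * (\<Prod>i\<in>UNIV. R i ^ ((E k)$i))" for k
  have sB: "summable B"
  proof -
    obtain T where "((\<lambda>\<nu>. cmod (c \<nu>) * (\<Prod>i\<in>UNIV. R i ^ (\<nu>$i))) has_sum T) UNIV"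
      using abs unfolding summable_on_def by (elim exE)
    then have "(B has_sum T) UNIV"
      unfolding B_def by (rule has_sum_reindex_bij_betw[OF bij, where f="\<lambda>\<nu>. cmod (c \<nu>) * (\<Prod>i\<in>UNIV. R i ^ (\<nu>$i))", THEN iffD2])
    then show ?thesis by (intro sums_summable has_sum_imp_sums)
  qed
  have B0: "0 \<le> B k" for k using s by (simp add: B_def R_def prod_nonneg)
  define S where "S = ball z (s/2)"
  have "s/2 < e"
  proof -
    have "real CARD('n) \<ge> 1" by (simp add: Suc_leI)
    then have "s \<le> e/2" using e by (simp add: s_def field_simps)
    then show ?thesis using e by simp
  qed
  then have SU: "S \<subseteq> U" using e(2) unfolding S_def by (meson less_imp_le subset_ball order_trans)
  define F where "F k x = c (E k) * monom (E k) x" for k x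
  define F' where "F' k x h = c (E k) * dmon (E k) x h" for k x h
  define M where "M = real CARD('n) / (s/2)"
  have M0: "0 \<le> M" using s by (simp add: M_def)
  have Fb: "norm (F' k x h) \<le> M * B k * norm h" if "x \<in> S" for k x h
  proof -
    have xi: "cmod (x$i) \<le> \<rho> i" for i
    proof -
      have "cmod (x$i) \<le> cmod (z$i) + cmod ((x - z)$i)"
        by (metis add_diff_cancel_left' norm_triangle_ineq vector_minus_component diff_add_cancel add.commute)
      also have "cmod ((x - z)$i) \<le> norm (x - z)" by (rule Finite_Cartesian_Product.norm_nth_le)
      also have "norm (x - z) < s/2" using that by (simp add: S_def dist_norm norm_minus_commute)
      finally show ?thesis by (simp add: \<rho>_def)
    qed
    have "cmod (dmon (E k) x h) \<le> (real CARD('n) / (s/2)) * (\<Prod>i\<in>UNIV. R i ^ ((E k)$i)) * norm h"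
      by (rule dmon_bound[where \<rho>=\<rho>]) (use xi s in \<open>auto simp: \<rho>_def R_def\<close>)
    then have "cmod (c (E k)) * cmod (dmon (E k) x h) \<le> cmod (c (E k)) * ((real CARD('n) / (s/2)) * (\<Prod>i\<in>UNIV. R i ^ ((E k)$i)) * norm h)"
      by (rule mult_left_mono) simp
    then show ?thesis
      unfolding F'_def B_def M_def norm_mult by (simp add: ac_simps)
  qed
  have sF': "summable (\<lambda>k. F' k x h)" if "x \<in> S" for x h
  proof (rule summable_comparison_test[where g="\<lambda>k. (M * norm h) * B k"])
    show "\<exists>N. \<forall>n\<ge>N. norm (F' n x h) \<le> (M * norm h) * B n" using Fb[OF that] by (auto simp: ac_simps)
    show "summable (\<lambda>k. (M * norm h) * B k)" by (rule summable_mult[OF sB])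
  qed
  define g' where "g' x h = (\<Sum>k. F' k x h)" for x h
  have Fd: "((F k) has_derivative (F' k x)) (at x within S)" for k x
  proof -
    have "((\<lambda>x. c (E k) * monom (E k) x) has_derivative (\<lambda>h. c (E k) * dmon (E k) x h)) (at x within S)"
      by (rule has_derivative_mult_right[OF monom_deriv])
    then show ?thesis by (simp add: F_def[abs_def] F'_def[abs_def])
  qed
  have unif: "\<forall>\<^sub>F n in sequentially. \<forall>x\<in>S. \<forall>h. norm (sum (\<lambda>i. F' i x h) {..<n} - g' x h) \<le> \<epsilon> * norm h"
    if \<epsilon>: "\<epsilon> > 0" for \<epsilon>
  proof -
    define r where "r = \<epsilon>/(M+1)"
    have r: "r > 0" using \<epsilon> M0 by (simp add: r_def)
    obtain N where N: "\<forall>n\<ge>N. norm (\<Sum>i. B (i+n)) < r" using suminf_exist_split[OF r sB] by blast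
    show ?thesis
      unfolding eventually_sequentially
    proof (intro exI allI impI ballI)
      fix n x h assume n: "N \<le> n" and x: "x \<in> S"
      have eq: "sum (\<lambda>i. F' i x h) {..<n} - g' x h = - (\<Sum>i. F' (i+n) x h)"
        using suminf_minus_initial_segment[OF sF'[OF x], of n] by (simp add: g'_def)
      have sB': "summable (\<lambda>i. (M * norm h) * B (i+n))" using sB by (intro summable_mult) simp
      have sN: "summable (\<lambda>i. norm (F' (i+n) x h))"
      proof (rule summable_comparison_test[OF _ sB'])
        have "norm (norm (F' (i+n) x h)) \<le> (M * norm h) * B (i+n)" for i
          using Fb[OF x, of "i+n" h] by (simp add: algebra_simps)
        then show "\<exists>N. \<forall>i\<ge>N. norm (norm (F' (i+n) x h)) \<le> (M * norm h) * B (i+n)" by blast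
      qed
      have "norm (\<Sum>i. F' (i+n) x h) \<le> (\<Sum>i. norm (F' (i+n) x h))"
        by (rule summable_norm[OF sN])
      also have "\<dots> \<le> (\<Sum>i. (M * norm h) * B (i+n))"
      proof (rule suminf_le[OF _ sN sB'])
        fix i show "norm (F' (i+n) x h) \<le> (M * norm h) * B (i+n)"
          using Fb[OF x, of "i+n" h] by (simp add: algebra_simps)
      qed
      also have "\<dots> = (M * norm h) * (\<Sum>i. B (i+n))"
        by (rule suminf_mult) (use sB in simp)
      also have "\<dots> \<le> (M * norm h) * r"
      proof (rule mult_left_mono)
        have "norm (\<Sum>i. B (i+n)) < r" using N n by blast
        then show "(\<Sum>i. B (i+n)) \<le> r" by (simp add: abs_less_iff)
      qed (use M0 in simp)
      also have "\<dots> \<le> \<epsilon> * norm h"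
      proof -
        have "M * r \<le> \<epsilon>" using M0 \<epsilon> by (simp add: r_def field_simps)
        from mult_right_mono[OF this norm_ge_zero[of h]] show ?thesis by (simp add: ac_simps)
      qed
      finally show "norm (sum (\<lambda>i. F' i x h) {..<n} - g' x h) \<le> \<epsilon> * norm h"
        unfolding eq by simp
    qed
  qed
  have z0: "z \<in> S" using s by (simp add: S_def)
  have sumsE: "(\<lambda>k. F k x) sums f x" if "x \<in> U" for x
  proof -
    have "((\<lambda>\<nu>. c \<nu> * monom \<nu> x) has_sum f x) UNIV" using hs that by blast
    then have "((\<lambda>k. c (E k) * monom (E k) x) has_sum f x) UNIV"
      by (rule has_sum_reindex_bij_betw[OF bij, where f="\<lambda>\<nu>. c \<nu> * monom \<nu> x", THEN iffD2])
    then show ?thesis unfolding F_def by (rule has_sum_imp_sums)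
  qed
  have "\<exists>G. \<forall>x\<in>S. (\<lambda>k. F k x) sums G x \<and> (G has_derivative g' x) (at x within S)"
    by (rule has_derivative_series[OF _ Fd unif z0 sumsE[OF z]]) (simp add: S_def)
  then obtain G where G: "\<And>x. x \<in> S \<Longrightarrow> (\<lambda>k. F k x) sums G x \<and> (G has_derivative g' x) (at x within S)"
    by blast
  have fG: "G x = f x" if "x \<in> S" for x
  proof -
    have "x \<in> U" using SU that by blast
    then show ?thesis using sums_unique2[OF conjunct1[OF G[OF that]] sumsE] by simp
  qed
  have "(G has_derivative g' z) (at z)"
    using G[OF z0] at_within_open[of z S] z0 by (simp add: S_def)
  then have fd: "(f has_derivative g' z) (at z)"
    by (rule has_derivative_transform_within_open[where s=S]) (use s fG in \<open>auto simp: S_def\<close>)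
  have lin: "g' z (axis j t) = t * g' z (axis j 1)" for j t
  proof -
    have "g' z (axis j t) = (\<Sum>k. t * F' k z (axis j 1))"
      unfolding g'_def F'_def by (simp add: dmon_axis[of _ _ j t] ac_simps)
    also have "\<dots> = t * g' z (axis j 1)"
      unfolding g'_def by (rule suminf_mult[OF sF'[OF z0]])
    finally show ?thesis .
  qed
  show ?thesis using fd lin by blast
qed


lemma herm_diff_left: "herm (x - y) z = herm x z - herm y z"
  unfolding herm_def by (simp add: algebra_simps sum_subtractf)
lemma herm_diff_right: "herm z (x - y) = herm z x - herm z y"
  unfolding herm_def by (simp add: algebra_simps sum_subtractf)
lemma herm_smult_left: "herm (t *s x) z = t * herm x z"
  unfolding herm_def by (simp add: sum_distrib_left ac_simps)
lemma herm_smult_right: "herm z (t *s x) = cnj t * herm z x"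
  unfolding herm_def by (simp add: sum_distrib_left ac_simps)
lemma herm_sym: "herm y x = cnj (herm x y)"
  unfolding herm_def by (simp add: ac_simps)

lemma normsq_sum: "(norm (x::complex^'n))\<^sup>2 = (\<Sum>j\<in>UNIV. (cmod (x$j))\<^sup>2)"
  unfolding norm_vec_def L2_set_def by (simp add: sum_nonneg)

lemma normsq_herm: "complex_of_real ((norm x)\<^sup>2) = herm x x"
  unfolding normsq_sum herm_def of_real_sum by (simp only: complex_norm_square)

lemma herm_self: "herm w w = complex_of_real (rho w)"
  unfolding rho_def herm_def of_real_sum by (simp only: complex_norm_square)

lemma rho_normsq: "rho w = (norm w)\<^sup>2"
  unfolding rho_def normsq_sum ..

lemma normsq_smult: "(norm (t *s y))\<^sup>2 = (cmod t)\<^sup>2 * (norm y)\<^sup>2"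
  unfolding normsq_sum by (simp add: norm_mult power_mult_distrib sum_distrib_left)

lemma proj_smult: "proj_perp w (t *s y) = t *s proj_perp w y"
  unfolding proj_perp_def herm_smult_left by (simp add: vector_ssub_ldistrib)

lemma proj_normsq:
  assumes "w \<noteq> 0"
  shows "(norm (proj_perp w x))\<^sup>2 = (norm x)\<^sup>2 - (cmod (herm x w))\<^sup>2 / rho w"
proof -
  have rpos: "rho w > 0" using assms by (simp add: rho_normsq)
  define h where "h = herm x w"
  define t where "t = h / complex_of_real (rho w)"
  have "complex_of_real ((norm (proj_perp w x))\<^sup>2) = herm (x - t *s w) (x - t *s w)"
    unfolding normsq_herm proj_perp_def herm_self t_def h_def ..
  also have "\<dots> = herm x x - cnj t * h - t * cnj h + t * cnj t * complex_of_real (rho w)"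
    by (simp add: herm_diff_left herm_diff_right herm_smult_left herm_smult_right herm_self[of w] h_def
        herm_sym[of w x] algebra_simps)
  also have "\<dots> = herm x x - complex_of_real ((cmod h)\<^sup>2 / rho w)"
  proof -
    have hh: "h * cnj h = complex_of_real (cmod h) * complex_of_real (cmod h)"
      using complex_norm_square[of h] by (simp add: power2_eq_square)
    show ?thesis using rpos unfolding t_def
      by (simp add: field_simps hh power2_eq_square)
  qed
  finally show ?thesis unfolding normsq_herm[symmetric] h_def
    by (metis of_real_diff of_real_eq_iff)
qed

lemma proj_zero_iff:
  assumes "w \<noteq> 0"
  shows "proj_perp w y = 0 \<longleftrightarrow> (\<exists>l. y = l *s w)"
proof
  assume "proj_perp w y = 0"
  then show "\<exists>l. y = l *s w" unfolding proj_perp_def by (metis eq_iff_diff_eq_0)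
next
  assume "\<exists>l. y = l *s w"
  then obtain l where y: "y = l *s w" by blast
  have "herm w w \<noteq> 0" using assms by (simp add: herm_self rho_normsq)
  then show "proj_perp w y = 0" unfolding y proj_perp_def herm_smult_left by simp
qed



lemma has_derivative_vec_lambda:
  fixes f :: "'a::real_normed_vector \<Rightarrow> 'b::euclidean_space^'n"
  assumes "\<And>i. ((\<lambda>x. f x $ i) has_derivative (\<lambda>h. f' h $ i)) (at x within S)"
  shows "(f has_derivative f') (at x within S)"
proof (rule has_derivative_componentwise_within[THEN iffD2], rule ballI)
  fix v :: "'b^'n" assume "v \<in> Basis"
  then obtain i u where u: "u \<in> Basis" "v = axis i u" by (auto simp: Basis_vec_def)
  have "((\<lambda>x. f x $ i \<bullet> u) has_derivative (\<lambda>h. f' h $ i \<bullet> u)) (at x within S)"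
    by (rule has_derivative_inner_left[OF assms])
  then show "((\<lambda>x. f x \<bullet> v) has_derivative (\<lambda>h. f' h \<bullet> v)) (at x within S)"
    unfolding u by (simp add: inner_axis)
qed

definition Dphi :: "nat \<Rightarrow> nat \<Rightarrow> complex^'n \<Rightarrow> complex^'n \<Rightarrow> complex^'n" where
  "Dphi a b w h = (\<chi> j. (w$j)^a * (of_nat b * cnj (h$j) * cnj (w$j)^(b-1)) + of_nat a * h$j * (w$j)^(a-1) * cnj (w$j)^b)"

lemma phi_deriv:
  fixes w :: "complex^'n"
  shows "((\<lambda>w. \<chi> j. (w$j)^a * (cnj (w$j))^b) has_derivative Dphi a b w) (at w)"
proof (rule has_derivative_vec_lambda)
  fix j
  have c: "((\<lambda>x. x$j) has_derivative (\<lambda>h. h$j)) (at w)"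
    by (rule bounded_linear_imp_has_derivative[OF bounded_linear_vec_nth])
  have cc: "((\<lambda>x. cnj (x$j)) has_derivative (\<lambda>h. cnj (h$j))) (at w)"
    by (rule bounded_linear.has_derivative[OF bounded_linear_cnj c])
  show "((\<lambda>x. (\<chi> j. (x$j)^a * (cnj (x$j))^b) $ j) has_derivative (\<lambda>h. Dphi a b w h $ j)) (at w)"
    unfolding Dphi_def using has_derivative_mult[OF has_derivative_power[OF c] has_derivative_power[OF cc]]
    by simp
qed

lemma wirt_compute:
  fixes f :: "complex^'n \<Rightarrow> complex" and w :: "complex^'n"
  assumes fd: "(f has_derivative L) (at (\<chi> j. (w$j)^a * (cnj (w$j))^b))"
    and lin: "\<And>j t. L (axis j t) = t * L (axis j 1)"
    and g: "g = (\<lambda>w. f (\<chi> j. (w$j)^a * (cnj (w$j))^b))"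
  shows "wirt_d g w j = L (axis j 1) * (of_nat a * (w$j)^(a-1) * cnj (w$j)^b)"
    and "wirt_dbar g w j = L (axis j 1) * (of_nat b * (w$j)^a * cnj (w$j)^(b-1))"
proof -
  have gd: "(g has_derivative (\<lambda>h. L (Dphi a b w h))) (at w)"
    unfolding g by (rule has_derivative_compose[OF phi_deriv fd])
  then have fr: "frechet_derivative g (at w) = (\<lambda>h. L (Dphi a b w h))"
    by (rule frechet_derivative_at[symmetric])
  define \<alpha> where "\<alpha> = of_nat a * (w$j)^(a-1) * cnj (w$j)^b"
  define \<beta> where "\<beta> = of_nat b * (w$j)^a * cnj (w$j)^(b-1)"
  have D1: "Dphi a b w (axis j 1) = axis j (\<alpha> + \<beta>)"
    by (auto simp: vec_eq_iff axis_def Dphi_def \<alpha>_def \<beta>_def algebra_simps)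
  have Di: "Dphi a b w (axis j \<i>) = axis j (\<i> * \<alpha> - \<i> * \<beta>)"
    by (auto simp: vec_eq_iff axis_def Dphi_def \<alpha>_def \<beta>_def algebra_simps)
  show "wirt_d g w j = L (axis j 1) * (of_nat a * (w$j)^(a-1) * cnj (w$j)^b)"
    unfolding wirt_d_def fr D1 Di lin[of j "\<alpha> + \<beta>"] lin[of j "\<i> * \<alpha> - \<i> * \<beta>"] \<alpha>_def[symmetric]
    by (simp add: algebra_simps)
  show "wirt_dbar g w j = L (axis j 1) * (of_nat b * (w$j)^a * cnj (w$j)^(b-1))"
    unfolding wirt_dbar_def fr D1 Di lin[of j "\<alpha> + \<beta>"] lin[of j "\<i> * \<alpha> - \<i> * \<beta>"] \<beta>_def[symmetric]
    by (simp add: algebra_simps)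
qed



lemma pw_real:
  fixes r :: real assumes "0 < a"
  shows "real b * (r^a * r^(b-1)) = real b * (r^(a-1) * r^b)"
proof (cases b)
  case (Suc b')
  obtain a' where a: "a = Suc a'" using assms gr0_conv_Suc by blast
  show ?thesis unfolding Suc a by (simp add: algebra_simps)
qed simp

lemma pw_cplx:
  fixes x y :: complex assumes "0 < a"
  shows "of_nat b * (x^a * (y^(b-1) * y)) = of_nat b * (x^(a-1) * x * y^b)"
proof (cases b)
  case (Suc b')
  obtain a' where a: "a = Suc a'" using assms gr0_conv_Suc by blast
  show ?thesis unfolding Suc a by (simp add: algebra_simps)
qed simp

theorem lemma21:
  fixes c :: "nat^'n \<Rightarrow> complex" and f g :: "complex^'n \<Rightarrow> complex"
    and U :: "(complex^'n) set" and a b :: nat and w :: "complex^'n"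
  assumes "open U" and "0 \<in> U"
    and "\<forall>z\<in>U. ((\<lambda>\<nu>. c \<nu> * monom \<nu> z) has_sum f z) UNIV"
    and "convenient c" and "nondegenerate c"
    and "b < a"
    and "g = (\<lambda>w. f (\<chi> j. (w$j) ^ a * (cnj (w$j)) ^ b))"
    and "(\<chi> j. (w$j) ^ a * (cnj (w$j)) ^ b) \<in> U"
    and "w \<noteq> 0" and "g w \<noteq> 0"
  shows "(norm (proj_perp w (g w *s vcnj (grad_d g w))))\<^sup>2
           - (norm (proj_perp w (cnj (g w) *s grad_dbar g w)))\<^sup>2 \<ge> 0
    \<and> ((norm (proj_perp w (g w *s vcnj (grad_d g w))))\<^sup>2
           - (norm (proj_perp w (cnj (g w) *s grad_dbar g w)))\<^sup>2 = 0
       \<longleftrightarrow> (\<exists>l1 l2. vcnj (grad_d g w) = l1 *s w \<and> grad_dbar g w = l2 *s w))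
    \<and> ((norm (proj_perp w (g w *s vcnj (grad_d g w))))\<^sup>2
           - (norm (proj_perp w (cnj (g w) *s grad_dbar g w)))\<^sup>2 = 0
       \<longrightarrow> (\<exists>l. grad_theta g w = l *s reeb w))"
proof -
  obtain L where fd: "(f has_derivative L) (at (\<chi> j. (w$j) ^ a * (cnj (w$j)) ^ b))"
    and lin0: "\<forall>j t. L (axis j t) = t * L (axis j 1)"
    using powser_deriv[OF assms(1) assms(3) assms(8)] by blast
  have lin: "L (axis j t) = t * L (axis j 1)" for j t using lin0 by blast
  define D where "D j = L (axis j 1)" for j
  define \<alpha> where "\<alpha> j = of_nat a * (w$j)^(a-1) * cnj (w$j)^b" for j
  define \<beta> where "\<beta> j = of_nat b * (w$j)^a * cnj (w$j)^(b-1)" for j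
  have wd: "wirt_d g w j = D j * \<alpha> j" for j
    unfolding D_def \<alpha>_def by (rule wirt_compute(1)[OF fd lin assms(7)])
  have wdb: "wirt_dbar g w j = D j * \<beta> j" for j
    unfolding D_def \<beta>_def by (rule wirt_compute(2)[OF fd lin assms(7)])
  define u where "u = vcnj (grad_d g w)"
  define v where "v = grad_dbar g w"
  define \<gamma> where "\<gamma> = g w"
  have uj: "u$j = cnj (D j * \<alpha> j)" for j by (simp add: u_def vcnj_def grad_d_def wd)
  have vj: "v$j = D j * \<beta> j" for j by (simp add: v_def grad_dbar_def wdb)
  have a0: "0 < a" using assms(6) by simp
  have c1: "real a * cmod (v$j) = real b * cmod (u$j)" for j
  proof -
    have "real a * cmod (v$j) = cmod (D j) * real a * (real b * (cmod (w$j)^a * cmod (w$j)^(b-1)))"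
      by (simp add: vj \<beta>_def norm_mult norm_power)
    also have "\<dots> = cmod (D j) * real a * (real b * (cmod (w$j)^(a-1) * cmod (w$j)^b))"
      using pw_real[OF a0, of b "cmod (w$j)"] by simp
    also have "\<dots> = real b * cmod (u$j)"
      by (simp add: uj \<alpha>_def norm_mult norm_power)
    finally show ?thesis .
  qed
  have nuv: "(real a)\<^sup>2 * (norm v)\<^sup>2 = (real b)\<^sup>2 * (norm u)\<^sup>2"
  proof -
    have "(real a)\<^sup>2 * (cmod (v$j))\<^sup>2 = (real b)\<^sup>2 * (cmod (u$j))\<^sup>2" for j
      using c1[of j] by (metis power_mult_distrib)
    then show ?thesis unfolding normsq_sum sum_distrib_left by simp
  qed
  have c2: "of_nat a * herm v w = of_nat b * cnj (herm u w)"
  proof -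
    have "of_nat a * herm v w = (\<Sum>j\<in>UNIV. of_nat a * D j * (of_nat b * ((w$j)^a * (cnj (w$j)^(b-1) * cnj (w$j)))))"
      unfolding herm_def sum_distrib_left by (simp add: vj \<beta>_def algebra_simps)
    also have "\<dots> = (\<Sum>j\<in>UNIV. of_nat a * D j * (of_nat b * ((w$j)^(a-1) * w$j * cnj (w$j)^b)))"
      by (rule sum.cong[OF refl]) (simp only: pw_cplx[OF a0])
    also have "\<dots> = of_nat b * cnj (herm u w)"
      unfolding herm_def cnj_sum sum_distrib_left by (simp add: uj \<alpha>_def algebra_simps)
    finally show ?thesis .
  qed
  have hvw: "(real a)\<^sup>2 * (cmod (herm v w))\<^sup>2 = (real b)\<^sup>2 * (cmod (herm u w))\<^sup>2"
  proof -
    have "cmod (of_nat a * herm v w) = cmod (of_nat b * cnj (herm u w))" using c2 by simp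
    then have "real a * cmod (herm v w) = real b * cmod (herm u w)" by (simp add: norm_mult)
    then show ?thesis by (metis power_mult_distrib)
  qed
  have rpos: "rho w > 0" using assms(9) by (simp add: rho_normsq)
  define P where "P y = (norm (proj_perp w y))\<^sup>2" for y
  have Pf: "P y = (norm y)\<^sup>2 - (cmod (herm y w))\<^sup>2 / rho w" for y
    unfolding P_def by (rule proj_normsq[OF assms(9)])
  have Pvu: "(real a)\<^sup>2 * P v = (real b)\<^sup>2 * P u"
    unfolding Pf using nuv hvw by (simp add: right_diff_distrib)
  have Pu0: "P u \<ge> 0" unfolding P_def by simp
  have Pv0: "P v \<ge> 0" unfolding P_def by simp
  define Df where "Df = (norm (proj_perp w (g w *s vcnj (grad_d g w))))\<^sup>2
           - (norm (proj_perp w (cnj (g w) *s grad_dbar g w)))\<^sup>2"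
  have Dfe: "Df = (cmod \<gamma>)\<^sup>2 * (P u - P v)"
    unfolding Df_def P_def u_def[symmetric] v_def[symmetric] \<gamma>_def[symmetric] proj_smult normsq_smult
    by (simp add: right_diff_distrib)
  have g0: "(cmod \<gamma>)\<^sup>2 > 0" using assms(10) by (simp add: \<gamma>_def)
  have ab: "(real a)\<^sup>2 - (real b)\<^sup>2 > 0" using assms(6)
    by (simp add: power_strict_mono)
  have key: "(real a)\<^sup>2 * Df = (cmod \<gamma>)\<^sup>2 * (((real a)\<^sup>2 - (real b)\<^sup>2) * P u)"
    unfolding Dfe using Pvu by (simp add: algebra_simps)
  have aa: "(real a)\<^sup>2 > 0" using a0 by simp
  have part1: "Df \<ge> 0"
  proof -
    have "(real a)\<^sup>2 * Df \<ge> 0" unfolding key using g0 ab Pu0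
      by (intro mult_nonneg_nonneg) (use assms(6) in auto)
    then show ?thesis using aa by (simp add: zero_le_mult_iff)
  qed
  have zero_iff: "Df = 0 \<longleftrightarrow> P u = 0"
  proof -
    have "Df = 0 \<longleftrightarrow> (real a)\<^sup>2 * Df = 0" using aa by simp
    also have "\<dots> \<longleftrightarrow> P u = 0" unfolding key using g0 ab assms(6) by simp
    finally show ?thesis .
  qed
  have part2: "Df = 0 \<longleftrightarrow> (\<exists>l1 l2. u = l1 *s w \<and> v = l2 *s w)"
  proof
    assume "Df = 0"
    then have pu: "P u = 0" using zero_iff by simp
    then have "P v = 0" using Pvu aa by simp
    then have "proj_perp w v = 0" "proj_perp w u = 0" using pu unfolding P_def by simp_all
    then show "\<exists>l1 l2. u = l1 *s w \<and> v = l2 *s w" using proj_zero_iff[OF assms(9)] by blast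
  next
    assume "\<exists>l1 l2. u = l1 *s w \<and> v = l2 *s w"
    then have "proj_perp w u = 0" using proj_zero_iff[OF assms(9)] by blast
    then show "Df = 0" using zero_iff unfolding P_def by simp
  qed
  have part3: "\<exists>l. grad_theta g w = l *s reeb w" if D0: "Df = 0"
  proof -
    obtain l1 l2 where l: "u = l1 *s w" "v = l2 *s w" using part2 D0 by blast
    have rho0: "complex_of_real (rho w) \<noteq> 0" using rpos by simp
    have ga: "\<gamma> \<noteq> 0" using assms(10) by (simp add: \<gamma>_def)
    define l where "l = (l1 / cnj \<gamma> - l2 / \<gamma>) * (2 * complex_of_real (rho w))"
    have "grad_theta g w = l *s reeb w"
    proof (subst vec_eq_iff, rule allI)
      fix j
      have "cnj (wirt_d g w j) = l1 * w$j" using l(1) by (simp add: u_def vcnj_def grad_d_def vec_eq_iff)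
      moreover have "wirt_dbar g w j = l2 * w$j" using l(2) by (simp add: v_def grad_dbar_def vec_eq_iff)
      ultimately show "grad_theta g w $ j = (l *s reeb w) $ j"
        using rho0 ga unfolding grad_theta_def reeb_def l_def \<gamma>_def[symmetric]
        by (simp add: field_simps)
    qed
    then show ?thesis by blast
  qed
  show ?thesis
    using part1 part2 part3 unfolding Df_def u_def v_def by blast
qed


end
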